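(* Let $(H,\mu_H,\Delta_H,\alpha_H)$ be a Hom-bialgebra and $(C,\mu_C,\alpha_C)$ a right $H$-module Hom-algebra with action $c\otimes h\mapsto c\cdot h$, with $\alpha_H,\alpha_C$ bijective. Then the Hom-smash product $H\# C$ is a left $H$-comodule Hom-algebra via $\lambda_{H\# C}:H\# C\to H\otimes(H\# C)$, $\lambda_{H\# C}(h\# c)=h_1\otimes(h_2\#\alpha_C(c))$.
   Context: Over a field $k$, no (co)units; $\Delta(h)=h_1\otimes h_2$. Hom-associative algebra $(A,\mu,\alpha)$: $\alpha(aa')=\alpha(a)\alpha(a')$, $\alpha(a)(a'a'')=(aa')\alpha(a'')$; morphisms commute with structure maps and multiplications; tensor products are componentwise. Hom-bialgebra $(H,\mu,\Delta,\alpha)$: $(H,\mu,\alpha)$ Hom-associative, $\Delta(h_1)\otimes\alpha(h_2)=\alpha(h_1)\otimes\Delta(h_2)$, $\Delta(hh')=h_1h'_1\otimes h_2h'_2$, $\Delta(\alpha(h))=\alpha(h_1)\otimes\alpha(h_2)$. Right $H$-module Hom-algebra: Hom-associative $(C,\mu_C,\alpha_C)$ with action satisfying $\alpha_C(c\cdot h)=\alpha_C(c)\cdot\alpha_H(h)$, $(c\cdot h)\cdot\alpha_H(h')=\alpha_C(c)\cdot(hh')$, $(cc')\cdot\alpha_H^2(h)=(c\cdot h_1)(c'\cdot h_2)$. Hom-smash product $H\# C$: $H\otimes C$, structure map $\alpha_H\otimes\alpha_C$, product $(h\# c)(h'\# c')=h\alpha_H^{-1}(h'_1)\#(\alpha_C^{-1}(c)\cdot\alpha_H^{-2}(h'_2))c'$.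 A left $H$-comodule structure on $(M,\alpha_M)$ is $\lambda:M\to H\otimes M$ with $(\alpha_H\otimes\alpha_M)\circ\lambda=\lambda\circ\alpha_M$ and $(\Delta_H\otimes\alpha_M)\circ\lambda=(\alpha_H\otimes\lambda)\circ\lambda$; a left $H$-comodule Hom-algebra is a Hom-associative algebra $D$ with a left $H$-comodule structure $D\to H\otimes D$ that is a morphism of Hom-associative algebras. *)

theory Defs
  imports "HOL-Library.Poly_Mapping"
begin

text \<open>
Model: a k-vector space with basis indexed by a type 'a is the free space
'a =>0 'k (every vector space is of this form up to isomorphism).
The tensor product of 'a =>0 'k and 'b =>0 'k is ('a * 'b) =>0 'k,
with x \<otimes> y given by (a,b) \<mapsto> x(a) * y(b).
\<close>

type_synonym ('a, 'k) vec = "'a \<Rightarrow>\<^sub>0 'k"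

definition scal :: "'k::field \<Rightarrow> ('a, 'k) vec \<Rightarrow> ('a, 'k) vec" where
  "scal c x = Poly_Mapping.map (\<lambda>v. c * v) x"

definition basisv :: "'a \<Rightarrow> ('a, 'k::field) vec" where
  "basisv a = Poly_Mapping.single a 1"

definition klinear :: "(('a, 'k::field) vec \<Rightarrow> ('b, 'k) vec) \<Rightarrow> bool" where
  "klinear f \<longleftrightarrow> (\<forall>x y. f (x + y) = f x + f y) \<and> (\<forall>c x. f (scal c x) = scal c (f x))"

definition lin_ext :: "('a \<Rightarrow> ('b, 'k::field) vec) \<Rightarrow> ('a, 'k) vec \<Rightarrow> ('b, 'k) vec" where
  "lin_ext F t = (\<Sum>p\<in>Poly_Mapping.keys t. scal (Poly_Mapping.lookup t p) (F p))"

definition tensor :: "('a, 'k::field) vec \<Rightarrow> ('b, 'k) vec \<Rightarrow> ('a \<times> 'b, 'k) vec" where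
  "tensor x y = (\<Sum>a\<in>Poly_Mapping.keys x. \<Sum>b\<in>Poly_Mapping.keys y. Poly_Mapping.single (a, b) (Poly_Mapping.lookup x a * Poly_Mapping.lookup y b))"

definition tmap :: "(('a, 'k::field) vec \<Rightarrow> ('c, 'k) vec) \<Rightarrow> (('b, 'k) vec \<Rightarrow> ('d, 'k) vec)
                    \<Rightarrow> ('a \<times> 'b, 'k) vec \<Rightarrow> ('c \<times> 'd, 'k) vec" where
  "tmap f g = lin_ext (\<lambda>(a, b). tensor (f (basisv a)) (g (basisv b)))"

definition relabel :: "('a \<Rightarrow> 'b) \<Rightarrow> ('a, 'k::field) vec \<Rightarrow> ('b, 'k) vec" where
  "relabel \<sigma> = lin_ext (\<lambda>p. basisv (\<sigma> p))"

definition tassoc :: "(('a \<times> 'b) \<times> 'c, 'k::field) vec \<Rightarrow> ('a \<times> ('b \<times> 'c), 'k) vec" where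
  "tassoc = relabel (\<lambda>((a, b), c). (a, (b, c)))"

definition midswap :: "(('a \<times> 'b) \<times> ('c \<times> 'd), 'k::field) vec \<Rightarrow> (('a \<times> 'c) \<times> ('b \<times> 'd), 'k) vec" where
  "midswap = relabel (\<lambda>((a, b), (c, d)). ((a, c), (b, d)))"

definition hom_assoc ::
  "(('a \<times> 'a, 'k::field) vec \<Rightarrow> ('a, 'k) vec) \<Rightarrow> (('a, 'k) vec \<Rightarrow> ('a, 'k) vec) \<Rightarrow> bool" where
  "hom_assoc \<mu> \<alpha> \<longleftrightarrow> klinear \<mu> \<and> klinear \<alpha> \<and>
     (\<forall>a b. \<alpha> (\<mu> (tensor a b)) = \<mu> (tensor (\<alpha> a) (\<alpha> b))) \<and>
     (\<forall>a b c. \<mu> (tensor (\<alpha> a) (\<mu> (tensor b c))) = \<mu> (tensor (\<mu> (tensor a b)) (\<alpha> c)))"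

text \<open>Hom-bialgebra (H, \<mu>, \<Delta>, \<alpha>), without (co)units.\<close>
definition hom_bialgebra ::
  "(('h \<times> 'h, 'k::field) vec \<Rightarrow> ('h, 'k) vec) \<Rightarrow> (('h, 'k) vec \<Rightarrow> ('h \<times> 'h, 'k) vec)
     \<Rightarrow> (('h, 'k) vec \<Rightarrow> ('h, 'k) vec) \<Rightarrow> bool" where
  "hom_bialgebra \<mu> \<Delta> \<alpha> \<longleftrightarrow> hom_assoc \<mu> \<alpha> \<and> klinear \<Delta> \<and>
     (\<forall>h. tassoc (tmap \<Delta> \<alpha> (\<Delta> h)) = tmap \<alpha> \<Delta> (\<Delta> h)) \<and>
     (\<forall>h h'. \<Delta> (\<mu> (tensor h h')) = tmap \<mu> \<mu> (midswap (tensor (\<Delta> h) (\<Delta> h')))) \<and>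
     (\<forall>h. \<Delta> (\<alpha> h) = tmap \<alpha> \<alpha> (\<Delta> h))"

definition right_module_hom_algebra ::
  "(('h \<times> 'h, 'k::field) vec \<Rightarrow> ('h, 'k) vec) \<Rightarrow> (('h, 'k) vec \<Rightarrow> ('h \<times> 'h, 'k) vec)
     \<Rightarrow> (('h, 'k) vec \<Rightarrow> ('h, 'k) vec)
     \<Rightarrow> (('c \<times> 'c, 'k) vec \<Rightarrow> ('c, 'k) vec) \<Rightarrow> (('c, 'k) vec \<Rightarrow> ('c, 'k) vec)
     \<Rightarrow> (('c \<times> 'h, 'k) vec \<Rightarrow> ('c, 'k) vec) \<Rightarrow> bool" where
  "right_module_hom_algebra \<mu>H \<Delta>H \<alpha>H \<mu>C \<alpha>C act \<longleftrightarrow>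
     hom_assoc \<mu>C \<alpha>C \<and> klinear act \<and>
     (\<forall>c h. \<alpha>C (act (tensor c h)) = act (tensor (\<alpha>C c) (\<alpha>H h))) \<and>
     (\<forall>c h h'. act (tensor (act (tensor c h)) (\<alpha>H h')) = act (tensor (\<alpha>C c) (\<mu>H (tensor h h')))) \<and>
     (\<forall>c c' h. act (tensor (\<mu>C (tensor c c')) (\<alpha>H (\<alpha>H h)))
               = \<mu>C (tmap act act (midswap (tensor (tensor c c') (\<Delta>H h)))))"

text \<open>Product of the Hom-smash product H # C on basis elements:
 (h # c)(h' # c') = h \<alpha>_H^{-1}(h'_1) # (\<alpha>_C^{-1}(c) \<cdot> \<alpha>_H^{-2}(h'_2)) c'.\<close>
definition smash_mu_elem ::
  "(('h \<times> 'h, 'k::field) vec \<Rightarrow> ('h, 'k) vec) \<Rightarrow> (('h, 'k) vec \<Rightarrow> ('h \<times> 'h, 'k) vec)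
     \<Rightarrow> (('h, 'k) vec \<Rightarrow> ('h, 'k) vec)
     \<Rightarrow> (('c \<times> 'c, 'k) vec \<Rightarrow> ('c, 'k) vec) \<Rightarrow> (('c, 'k) vec \<Rightarrow> ('c, 'k) vec)
     \<Rightarrow> (('c \<times> 'h, 'k) vec \<Rightarrow> ('c, 'k) vec)
     \<Rightarrow> ('h, 'k) vec \<Rightarrow> ('c, 'k) vec \<Rightarrow> ('h, 'k) vec \<Rightarrow> ('c, 'k) vec \<Rightarrow> ('h \<times> 'c, 'k) vec" where
  "smash_mu_elem \<mu>H \<Delta>H \<alpha>H \<mu>C \<alpha>C act h c h' c' =
     tmap (\<lambda>x. \<mu>H (tensor h (inv \<alpha>H x)))
          (\<lambda>y. \<mu>C (tensor (act (tensor (inv \<alpha>C c) (inv \<alpha>H (inv \<alpha>H y)))) c'))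
          (\<Delta>H h')"

definition smash_mu ::
  "(('h \<times> 'h, 'k::field) vec \<Rightarrow> ('h, 'k) vec) \<Rightarrow> (('h, 'k) vec \<Rightarrow> ('h \<times> 'h, 'k) vec)
     \<Rightarrow> (('h, 'k) vec \<Rightarrow> ('h, 'k) vec)
     \<Rightarrow> (('c \<times> 'c, 'k) vec \<Rightarrow> ('c, 'k) vec) \<Rightarrow> (('c, 'k) vec \<Rightarrow> ('c, 'k) vec)
     \<Rightarrow> (('c \<times> 'h, 'k) vec \<Rightarrow> ('c, 'k) vec)
     \<Rightarrow> (('h \<times> 'c) \<times> ('h \<times> 'c), 'k) vec \<Rightarrow> ('h \<times> 'c, 'k) vec" where
  "smash_mu \<mu>H \<Delta>H \<alpha>H \<mu>C \<alpha>C act =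
     lin_ext (\<lambda>((i, j), (i', j')).
        smash_mu_elem \<mu>H \<Delta>H \<alpha>H \<mu>C \<alpha>C act (basisv i) (basisv j) (basisv i') (basisv j'))"

definition smash_alpha ::
  "(('h, 'k::field) vec \<Rightarrow> ('h, 'k) vec) \<Rightarrow> (('c, 'k) vec \<Rightarrow> ('c, 'k) vec)
     \<Rightarrow> ('h \<times> 'c, 'k) vec \<Rightarrow> ('h \<times> 'c, 'k) vec" where
  "smash_alpha \<alpha>H \<alpha>C = tmap \<alpha>H \<alpha>C"

definition left_comodule ::
  "(('h, 'k::field) vec \<Rightarrow> ('h \<times> 'h, 'k) vec) \<Rightarrow> (('h, 'k) vec \<Rightarrow> ('h, 'k) vec)
     \<Rightarrow> (('m, 'k) vec \<Rightarrow> ('m, 'k) vec) \<Rightarrow> (('m, 'k) vec \<Rightarrow> ('h \<times> 'm, 'k) vec) \<Rightarrow> bool" where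
  "left_comodule \<Delta>H \<alpha>H \<alpha>M coact \<longleftrightarrow> klinear coact \<and>
     (\<forall>m. tmap \<alpha>H \<alpha>M (coact m) = coact (\<alpha>M m)) \<and>
     (\<forall>m. tassoc (tmap \<Delta>H \<alpha>M (coact m)) = tmap \<alpha>H coact (coact m))"

definition hom_assoc_morphism ::
  "(('a \<times> 'a, 'k::field) vec \<Rightarrow> ('a, 'k) vec) \<Rightarrow> (('a, 'k) vec \<Rightarrow> ('a, 'k) vec)
     \<Rightarrow> (('b \<times> 'b, 'k) vec \<Rightarrow> ('b, 'k) vec) \<Rightarrow> (('b, 'k) vec \<Rightarrow> ('b, 'k) vec)
     \<Rightarrow> (('a, 'k) vec \<Rightarrow> ('b, 'k) vec) \<Rightarrow> bool" where
  "hom_assoc_morphism \<mu>A \<alpha>A \<mu>B \<alpha>B f \<longleftrightarrow> klinear f \<and>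
     (\<forall>a. f (\<alpha>A a) = \<alpha>B (f a)) \<and>
     (\<forall>a a'. f (\<mu>A (tensor a a')) = \<mu>B (tensor (f a) (f a')))"

definition tensor_mu ::
  "(('a \<times> 'a, 'k::field) vec \<Rightarrow> ('a, 'k) vec) \<Rightarrow> (('b \<times> 'b, 'k) vec \<Rightarrow> ('b, 'k) vec)
     \<Rightarrow> (('a \<times> 'b) \<times> ('a \<times> 'b), 'k) vec \<Rightarrow> ('a \<times> 'b, 'k) vec" where
  "tensor_mu \<mu>A \<mu>B t = tmap \<mu>A \<mu>B (midswap t)"

definition left_comodule_hom_algebra ::
  "(('h \<times> 'h, 'k::field) vec \<Rightarrow> ('h, 'k) vec) \<Rightarrow> (('h, 'k) vec \<Rightarrow> ('h \<times> 'h, 'k) vec)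
     \<Rightarrow> (('h, 'k) vec \<Rightarrow> ('h, 'k) vec)
     \<Rightarrow> (('d \<times> 'd, 'k) vec \<Rightarrow> ('d, 'k) vec) \<Rightarrow> (('d, 'k) vec \<Rightarrow> ('d, 'k) vec)
     \<Rightarrow> (('d, 'k) vec \<Rightarrow> ('h \<times> 'd, 'k) vec) \<Rightarrow> bool" where
  "left_comodule_hom_algebra \<mu>H \<Delta>H \<alpha>H \<mu>D \<alpha>D coact \<longleftrightarrow>
     hom_assoc \<mu>D \<alpha>D \<and> left_comodule \<Delta>H \<alpha>H \<alpha>D coact \<and>
     hom_assoc_morphism \<mu>D \<alpha>D (tensor_mu \<mu>H \<mu>D) (tmap \<alpha>H \<alpha>D) coact"

definition smash_coaction ::
  "(('h, 'k::field) vec \<Rightarrow> ('h \<times> 'h, 'k) vec) \<Rightarrow> (('c, 'k) vec \<Rightarrow> ('c, 'k) vec)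
     \<Rightarrow> ('h \<times> 'c, 'k) vec \<Rightarrow> ('h \<times> ('h \<times> 'c), 'k) vec" where
  "smash_coaction \<Delta>H \<alpha>C t = tassoc (tmap \<Delta>H \<alpha>C t)"

end

theory Submission
  imports Defs
begin



lemma lookup_scal[simp]: "Poly_Mapping.lookup (scal c x) a = c * Poly_Mapping.lookup x a"
  unfolding scal_def by transfer (simp add: when_def)

lemma lookup_basisv: "Poly_Mapping.lookup (basisv a) b = (if a = b then 1 else 0)"
  unfolding basisv_def by (simp add: lookup_single when_def)

lemma keys_basisv[simp]: "Poly_Mapping.keys (basisv a :: ('a,'k::field) vec) = {a}"
  unfolding basisv_def by simp

lemma scal_add[simp]: "scal c (x + y) = scal c x + scal c y"
  by (rule poly_mapping_eqI) (simp add: lookup_add algebra_simps)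
lemma scal_add2: "scal (c + d) x = scal c x + scal d x"
  by (rule poly_mapping_eqI) (simp add: lookup_add algebra_simps)
lemma scal_scal[simp]: "scal c (scal d x) = scal (c * d) x"
  by (rule poly_mapping_eqI) (simp add: algebra_simps)
lemma scal_zero[simp]: "scal 0 x = 0"
  by (rule poly_mapping_eqI) simp
lemma scal_zero2[simp]: "scal c 0 = 0"
  by (rule poly_mapping_eqI) simp
lemma scal_one[simp]: "scal 1 x = x"
  by (rule poly_mapping_eqI) simp
lemma scal_sum: "scal c (sum f S) = (\<Sum>i\<in>S. scal c (f i))"
  by (induction S rule: infinite_finite_induct) auto

lemma klinearD: assumes "klinear f" shows "f (x + y) = f x + f y" "f (scal c x) = scal c (f x)"
  using assms unfolding klinear_def by auto

lemma klinear_zero: assumes "klinear f" shows "f 0 = 0"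
proof -
  have "f (0 + 0) = f 0 + f 0" using klinearD[OF assms] by blast
  then show ?thesis by simp
qed

lemma klinear_sum: assumes "klinear f" shows "f (sum g S) = (\<Sum>i\<in>S. f (g i))"
  by (induction S rule: infinite_finite_induct) (auto simp: klinear_zero[OF assms] klinearD[OF assms])

lemma lin_ext_superset:
  assumes "finite S" "Poly_Mapping.keys t \<subseteq> S"
  shows "lin_ext F t = (\<Sum>p\<in>S. scal (Poly_Mapping.lookup t p) (F p))"
  unfolding lin_ext_def
  by (rule sum.mono_neutral_left) (use assms in \<open>auto simp: in_keys_iff\<close>)

lemma lin_ext_linear: "klinear (lin_ext F)"
  unfolding klinear_def
proof safe
  fix x y :: "('a,'b) vec"
  let ?S = "Poly_Mapping.keys x \<union> Poly_Mapping.keys y"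
  have "lin_ext F (x + y) = (\<Sum>p\<in>?S. scal (Poly_Mapping.lookup (x+y) p) (F p))"
    by (rule lin_ext_superset) (auto simp: keys_add)
  also have "\<dots> = (\<Sum>p\<in>?S. scal (Poly_Mapping.lookup x p) (F p)) + (\<Sum>p\<in>?S. scal (Poly_Mapping.lookup y p) (F p))"
    by (simp add: lookup_add scal_add2 sum.distrib)
  also have "\<dots> = lin_ext F x + lin_ext F y"
    by (subst (1 2) lin_ext_superset[where S = ?S]) auto
  finally show "lin_ext F (x + y) = lin_ext F x + lin_ext F y" .
next
  fix c x
  have "lin_ext F (scal c x) = (\<Sum>p\<in>Poly_Mapping.keys x. scal (Poly_Mapping.lookup (scal c x) p) (F p))"
    by (rule lin_ext_superset) (auto simp: in_keys_iff)
  also have "\<dots> = scal c (lin_ext F x)"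
    by (simp add: lin_ext_def scal_sum)
  finally show "lin_ext F (scal c x) = scal c (lin_ext F x)" .
qed

lemma lin_ext_basisv[simp]: "lin_ext F (basisv a) = F a"
  by (simp add: lin_ext_def lookup_basisv)

lemma vec_expand: "x = lin_ext basisv x"
  unfolding lin_ext_def
proof (rule poly_mapping_eqI)
  fix k
  show "Poly_Mapping.lookup x k = Poly_Mapping.lookup (\<Sum>p\<in>Poly_Mapping.keys x. scal (Poly_Mapping.lookup x p) (basisv p)) k"
  proof -
    have "(\<Sum>p\<in>Poly_Mapping.keys x. Poly_Mapping.lookup x p * (if p = k then 1 else 0)) =
          (\<Sum>p\<in>Poly_Mapping.keys x. if p = k then Poly_Mapping.lookup x p else 0)"
      by (rule sum.cong) auto
    then show ?thesis by (simp add: lookup_sum lookup_basisv in_keys_iff)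
  qed
qed

lemma klinear_lin_ext: assumes "klinear f" shows "f x = lin_ext (\<lambda>a. f (basisv a)) x"
proof -
  have "f x = f (lin_ext basisv x)" by (simp only: vec_expand[symmetric])
  also have "\<dots> = lin_ext (\<lambda>a. f (basisv a)) x"
    unfolding lin_ext_def by (simp add: klinear_sum[OF assms] klinearD[OF assms])
  finally show ?thesis .
qed

lemma lin_eq:
  assumes "klinear f" "klinear g" "\<And>a. f (basisv a) = g (basisv a)"
  shows "f x = g x"
proof -
  have "f x = lin_ext (\<lambda>a. f (basisv a)) x" by (rule klinear_lin_ext[OF assms(1)])
  also have "\<dots> = lin_ext (\<lambda>a. g (basisv a)) x" using assms(3) by simp
  also have "\<dots> = g x" by (rule klinear_lin_ext[OF assms(2), symmetric])
  finally show ?thesis .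
qed

lemma lookup_tensor[simp]:
  "Poly_Mapping.lookup (tensor x y) (a, b) = Poly_Mapping.lookup x a * Poly_Mapping.lookup y b"
proof -
  have "Poly_Mapping.lookup (tensor x y) (a, b) =
     (\<Sum>a'\<in>Poly_Mapping.keys x. \<Sum>b'\<in>Poly_Mapping.keys y. if a' = a then (if b' = b then Poly_Mapping.lookup x a' * Poly_Mapping.lookup y b' else 0) else 0)"
    unfolding tensor_def lookup_sum
    by (intro sum.cong refl) (auto simp: lookup_single when_def)
  also have "\<dots> = (\<Sum>a'\<in>Poly_Mapping.keys x. if a' = a then (\<Sum>b'\<in>Poly_Mapping.keys y. if b' = b then Poly_Mapping.lookup x a' * Poly_Mapping.lookup y b' else 0) else 0)"
    by (intro sum.cong refl) auto
  also have "\<dots> = Poly_Mapping.lookup x a * Poly_Mapping.lookup y b"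
    by (simp only: sum.delta finite_keys) (auto simp: in_keys_iff)
  finally show ?thesis .
qed




lemma lookup_tensor': "Poly_Mapping.lookup (tensor x y) p = Poly_Mapping.lookup x (fst p) * Poly_Mapping.lookup y (snd p)"
  by (cases p) simp

lemma tensor_add1[simp]: "tensor (x + x') y = tensor x y + tensor x' y"
  by (rule poly_mapping_eqI) (simp add: lookup_tensor' lookup_add algebra_simps)
lemma tensor_add2[simp]: "tensor x (y + y') = tensor x y + tensor x y'"
  by (rule poly_mapping_eqI) (simp add: lookup_tensor' lookup_add algebra_simps)
lemma tensor_scal1[simp]: "tensor (scal c x) y = scal c (tensor x y)"
  by (rule poly_mapping_eqI) (simp add: lookup_tensor' algebra_simps)
lemma tensor_scal2[simp]: "tensor x (scal c y) = scal c (tensor x y)"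
  by (rule poly_mapping_eqI) (simp add: lookup_tensor' algebra_simps)
lemma tensor_zero1[simp]: "tensor 0 y = 0"
  by (rule poly_mapping_eqI) (simp add: lookup_tensor')
lemma tensor_zero2[simp]: "tensor x 0 = 0"
  by (rule poly_mapping_eqI) (simp add: lookup_tensor')
lemma tensor_basisv: "tensor (basisv a) (basisv b) = basisv (a, b)"
  by (rule poly_mapping_eqI) (simp add: lookup_tensor' lookup_basisv prod_eq_iff)

lemma klinear_tensor1: "klinear (\<lambda>x. tensor x y)" unfolding klinear_def by simp
lemma klinear_tensor2: "klinear (\<lambda>y. tensor x y)" unfolding klinear_def by simp

lemma klinear_comp: "klinear f \<Longrightarrow> klinear g \<Longrightarrow> klinear (\<lambda>x. f (g x))"
  unfolding klinear_def by simp

lemma lin_eq_tensor: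
  fixes F G :: "('a \<times> 'b, 'k::field) vec \<Rightarrow> ('c, 'k) vec"
  assumes "klinear F" "klinear G" "\<And>a b. F (tensor (basisv a) (basisv b)) = G (tensor (basisv a) (basisv b))"
  shows "F t = G t"
proof (rule lin_eq[OF assms(1,2)])
  fix p :: "'a \<times> 'b"
  obtain a b where "p = (a, b)" by (cases p)
  then show "F (basisv p) = G (basisv p)" using assms(3)[of a b] by (simp add: tensor_basisv)
qed

lemma bilin_eq:
  assumes "\<And>y. klinear (\<lambda>x. F x y)" "\<And>y. klinear (\<lambda>x. G x y)"
    "\<And>x. klinear (\<lambda>y. F x y)" "\<And>x. klinear (\<lambda>y. G x y)"
    "\<And>a b. F (basisv a) (basisv b) = G (basisv a) (basisv b)"
  shows "F x y = G x y"
proof -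
  have "F x (basisv b) = G x (basisv b)" for b
    by (rule lin_eq[where f = "\<lambda>x. F x (basisv b)" and g = "\<lambda>x. G x (basisv b)", OF assms(1,2)]) (rule assms(5))
  then show ?thesis
    by (rule lin_eq[where f = "\<lambda>y. F x y" and g = "\<lambda>y. G x y", OF assms(3,4)])
qed

definition contract :: "(('a, 'k::field) vec \<Rightarrow> ('b, 'k) vec \<Rightarrow> ('c, 'k) vec) \<Rightarrow> ('a \<times> 'b, 'k) vec \<Rightarrow> ('c, 'k) vec" where
  "contract \<Phi> t = lin_ext (\<lambda>(a, b). \<Phi> (basisv a) (basisv b)) t"

lemma contract_linear: "klinear (contract \<Phi>)"
  unfolding contract_def by (rule lin_ext_linear)

lemma contract_add[simp]: "contract \<Phi> (x + y) = contract \<Phi> x + contract \<Phi> y"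
  using klinearD[OF contract_linear] by blast
lemma contract_scal[simp]: "contract \<Phi> (scal c x) = scal c (contract \<Phi> x)"
  using klinearD[OF contract_linear] by blast
lemma contract_zero[simp]: "contract \<Phi> 0 = 0"
  using klinear_zero[OF contract_linear] by blast

lemma contract_basis[simp]: "contract \<Phi> (tensor (basisv a) (basisv b)) = \<Phi> (basisv a) (basisv b)"
  unfolding contract_def tensor_basisv by simp

lemma contract_def2: "contract \<Phi> t = (\<Sum>p\<in>Poly_Mapping.keys t. scal (Poly_Mapping.lookup t p) (\<Phi> (basisv (fst p)) (basisv (snd p))))"
  unfolding contract_def lin_ext_def by (simp add: case_prod_beta)

lemma contract_fadd[simp]: "contract (\<lambda>a b. \<Phi> a b + \<Psi> a b) t = contract \<Phi> t + contract \<Psi> t"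
  unfolding contract_def2 by (simp add: sum.distrib)
lemma contract_fscal[simp]: "contract (\<lambda>a b. scal c (\<Phi> a b)) t = scal c (contract \<Phi> t)"
  unfolding contract_def2 by (simp add: scal_sum mult.commute)
lemma contract_fzero[simp]: "contract (\<lambda>a b. 0) t = 0"
  unfolding contract_def2 by simp

lemma contract_cong_basis:
  "(\<And>a b. \<Phi> (basisv a) (basisv b) = \<Psi> (basisv a) (basisv b)) \<Longrightarrow> contract \<Phi> t = contract \<Psi> t"
  unfolding contract_def by simp

lemma contract_tensor:
  assumes "\<And>y. klinear (\<lambda>x. \<Phi> x y)" "\<And>x. klinear (\<lambda>y. \<Phi> x y)"
  shows "contract \<Phi> (tensor x y) = \<Phi> x y"
  by (rule bilin_eq[where F = "\<lambda>x y. contract \<Phi> (tensor x y)"])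
     (auto intro: assms klinear_comp[OF contract_linear] klinear_tensor1 klinear_tensor2)

lemma contract_lin_fun:
  assumes "klinear F" shows "F (contract \<Phi> t) = contract (\<lambda>a b. F (\<Phi> a b)) t"
  by (rule lin_eq_tensor[OF klinear_comp[OF assms contract_linear] contract_linear]) simp

lemma contract_contract:
  "contract \<Psi> (contract \<Phi> t) = contract (\<lambda>a b. contract \<Psi> (\<Phi> a b)) t"
  by (rule contract_lin_fun[OF contract_linear])

lemma contract_swap:
  "contract (\<lambda>x y. contract (\<lambda>a b. \<Phi> x y a b) s) t = contract (\<lambda>a b. contract (\<lambda>x y. \<Phi> x y a b) t) s"
  unfolding contract_def2 by (simp add: scal_sum sum.swap[of _ "Poly_Mapping.keys t"] mult.commute)

lemma klinear_expand: "klinear F \<Longrightarrow> F t = contract (\<lambda>x y. F (tensor x y)) t"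
  by (rule lin_eq_tensor[OF _ contract_linear]) simp_all

lemma tmap_contract: "tmap f g t = contract (\<lambda>x y. tensor (f x) (g y)) t"
  unfolding tmap_def contract_def by simp

lemma relabel_basisv[simp]: "relabel \<sigma> (basisv p) = basisv (\<sigma> p)"
  unfolding relabel_def by simp

lemma relabel_linear: "klinear (relabel \<sigma>)"
  unfolding relabel_def by (rule lin_ext_linear)

lemma tassoc_linear: "klinear tassoc" unfolding tassoc_def by (rule relabel_linear)
lemma midswap_linear: "klinear midswap" unfolding midswap_def by (rule relabel_linear)

lemma tensor_contract1: "tensor (contract \<Phi> t) y = contract (\<lambda>a b. tensor (\<Phi> a b) y) t"
  by (rule contract_lin_fun[OF klinear_tensor1])
lemma tensor_contract2: "tensor y (contract \<Phi> t) = contract (\<lambda>a b. tensor y (\<Phi> a b)) t"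
  by (rule contract_lin_fun[OF klinear_tensor2])

lemma klinear_id: "klinear (\<lambda>x. x)" unfolding klinear_def by simp

lemma contract_tensor_id: "contract (\<lambda>x y. tensor x y) m = m"
  by (rule lin_eq_tensor[OF contract_linear klinear_id]) simp

lemma contract_cong: assumes "\<And>x y. \<Phi> x y = \<Psi> x y" shows "contract \<Phi> t = contract \<Psi> t"
proof -
  have "\<Phi> = \<Psi>" using assms by (intro ext)
  then show ?thesis by simp
qed

lemma tassoc_add[simp]: "tassoc (x + y) = tassoc x + tassoc y" using klinearD[OF tassoc_linear] by blast
lemma tassoc_scal[simp]: "tassoc (scal c x) = scal c (tassoc x)" using klinearD[OF tassoc_linear] by blast
lemma midswap_add[simp]: "midswap (x + y) = midswap x + midswap y" using klinearD[OF midswap_linear] by blast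
lemma midswap_scal[simp]: "midswap (scal c x) = scal c (midswap x)" using klinearD[OF midswap_linear] by blast
lemma tassoc_contract[simp]: "tassoc (contract \<Phi> t) = contract (\<lambda>a b. tassoc (\<Phi> a b)) t"
  by (rule contract_lin_fun[OF tassoc_linear])
lemma midswap_contract[simp]: "midswap (contract \<Phi> t) = contract (\<lambda>a b. midswap (\<Phi> a b)) t"
  by (rule contract_lin_fun[OF midswap_linear])

lemma tassoc_tensorL: "tassoc (tensor s c) = contract (\<lambda>a b. tensor a (tensor b c)) s"
proof (rule bilin_eq[where F = "\<lambda>s c. tassoc (tensor s c)" and G = "\<lambda>s c. contract (\<lambda>a b. tensor a (tensor b c)) s"])
  fix p d
  obtain a b where p: "p = (a, b)" by (cases p)
  show "tassoc (tensor (basisv p) (basisv d)) = contract (\<lambda>a b. tensor a (tensor b (basisv d))) (basisv p)"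
    unfolding p tensor_basisv[symmetric] contract_basis
    by (simp add: tensor_basisv tassoc_def)
qed (auto simp: klinear_def)

lemma midswap_tensorL:
  fixes s :: "('a \<times> 'b, 'k::field) vec" and t :: "('c \<times> 'd, 'k) vec"
  shows "midswap (tensor s t) = contract (\<lambda>a b. contract (\<lambda>c d. tensor (tensor a c) (tensor b d)) t) s"
proof (rule bilin_eq[where F = "\<lambda>s t. midswap (tensor s t)"])
  fix p :: "'a \<times> 'b" and q :: "'c \<times> 'd"
  obtain a b where p: "p = (a, b)" by (cases p)
  obtain c d where q: "q = (c, d)" by (cases q)
  show "midswap (tensor (basisv p) (basisv q)) = contract (\<lambda>a b. contract (\<lambda>c d. tensor (tensor a c) (tensor b d)) (basisv q)) (basisv p)"
    unfolding p q tensor_basisv[symmetric] contract_basis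
    by (simp add: tensor_basisv midswap_def)
qed (auto simp: klinear_def)




lemma contract_tensor_simp:
  assumes "\<forall>y. klinear (\<lambda>x. \<Phi> x y)" "\<forall>x. klinear (\<lambda>y. \<Phi> x y)"
  shows "contract \<Phi> (tensor x y) = \<Phi> x y"
  using contract_tensor assms by blast

lemma lin_simps: assumes "klinear f" shows "f (x + y) = f x + f y" "f (scal c x) = scal c (f x)"
   "f 0 = 0" "f (contract \<Phi> t) = contract (\<lambda>a b. f (\<Phi> a b)) t"
  using klinearD[OF assms] klinear_zero[OF assms] contract_lin_fun[OF assms] by auto

locale smash =
  fixes \<mu>H :: "('h \<times> 'h, 'k::field) vec \<Rightarrow> ('h, 'k) vec"
    and \<Delta>H :: "('h, 'k) vec \<Rightarrow> ('h \<times> 'h, 'k) vec"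
    and \<alpha>H :: "('h, 'k) vec \<Rightarrow> ('h, 'k) vec"
    and \<mu>C :: "('c \<times> 'c, 'k) vec \<Rightarrow> ('c, 'k) vec"
    and \<alpha>C :: "('c, 'k) vec \<Rightarrow> ('c, 'k) vec"
    and act :: "('c \<times> 'h, 'k) vec \<Rightarrow> ('c, 'k) vec"
  assumes HB: "hom_bialgebra \<mu>H \<Delta>H \<alpha>H"
    and RM: "right_module_hom_algebra \<mu>H \<Delta>H \<alpha>H \<mu>C \<alpha>C act"
    and bH: "bij \<alpha>H" and bC: "bij \<alpha>C"
begin

abbreviation "\<iota> \<equiv> inv \<alpha>H"
abbreviation "\<kappa> \<equiv> inv \<alpha>C"

lemma lin_muH: "klinear \<mu>H" and lin_DH: "klinear \<Delta>H" and lin_aH: "klinear \<alpha>H"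
  and lin_muC: "klinear \<mu>C" and lin_aC: "klinear \<alpha>C" and lin_act: "klinear act"
  using HB RM unfolding hom_bialgebra_def right_module_hom_algebra_def hom_assoc_def by auto

lemma aH_iota[simp]: "\<alpha>H (\<iota> x) = x" using bH by (simp add: bij_def surj_f_inv_f)
lemma iota_aH[simp]: "\<iota> (\<alpha>H x) = x" using bH by (simp add: bij_def inv_f_f)
lemma aC_kappa[simp]: "\<alpha>C (\<kappa> x) = x" using bC by (simp add: bij_def surj_f_inv_f)
lemma kappa_aC[simp]: "\<kappa> (\<alpha>C x) = x" using bC by (simp add: bij_def inv_f_f)

lemma lin_inv:
  assumes "klinear f" "\<And>x. f (g x) = x" "\<And>x. g (f x) = x" shows "klinear g"
  unfolding klinear_def
proof safe
  fix x y
  have "x + y = f (g x + g y)" by (simp add: klinearD[OF assms(1)] assms)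
  then show "g (x + y) = g x + g y" by (simp add: assms)
next
  fix c x
  have "scal c x = f (scal c (g x))" by (simp add: klinearD[OF assms(1)] assms)
  then show "g (scal c x) = scal c (g x)" by (simp add: assms)
qed

lemma lin_iota: "klinear \<iota>" by (rule lin_inv[OF lin_aH]) simp_all
lemma lin_kappa: "klinear \<kappa>" by (rule lin_inv[OF lin_aC]) simp_all

lemmas L_simps[simp] = lin_simps[OF lin_muH] lin_simps[OF lin_DH] lin_simps[OF lin_aH]
  lin_simps[OF lin_muC] lin_simps[OF lin_aC] lin_simps[OF lin_act] lin_simps[OF lin_iota] lin_simps[OF lin_kappa]

lemma coassoc: "tassoc (tmap \<Delta>H \<alpha>H (\<Delta>H h)) = tmap \<alpha>H \<Delta>H (\<Delta>H h)"
  using HB unfolding hom_bialgebra_def by blast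

lemma Hmult: "\<alpha>H (\<mu>H (tensor a b)) = \<mu>H (tensor (\<alpha>H a) (\<alpha>H b))"
  and Hassoc: "\<mu>H (tensor (\<alpha>H a) (\<mu>H (tensor b c))) = \<mu>H (tensor (\<mu>H (tensor a b)) (\<alpha>H c))"
  and Dmult: "\<Delta>H (\<mu>H (tensor h h')) = tmap \<mu>H \<mu>H (midswap (tensor (\<Delta>H h) (\<Delta>H h')))"
  and Dalpha: "\<Delta>H (\<alpha>H h) = tmap \<alpha>H \<alpha>H (\<Delta>H h)"
  using HB unfolding hom_bialgebra_def hom_assoc_def by blast+

lemma Cmult: "\<alpha>C (\<mu>C (tensor a b)) = \<mu>C (tensor (\<alpha>C a) (\<alpha>C b))"
  and Cassoc: "\<mu>C (tensor (\<alpha>C a) (\<mu>C (tensor b c))) = \<mu>C (tensor (\<mu>C (tensor a b)) (\<alpha>C c))"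
  and Aalpha: "\<alpha>C (act (tensor c h)) = act (tensor (\<alpha>C c) (\<alpha>H h))"
  and Aact: "act (tensor (act (tensor c h)) (\<alpha>H h')) = act (tensor (\<alpha>C c) (\<mu>H (tensor h h')))"
  and Amu: "act (tensor (\<mu>C (tensor c c')) (\<alpha>H (\<alpha>H h))) = \<mu>C (tmap act act (midswap (tensor (tensor c c') (\<Delta>H h))))"
  using RM unfolding right_module_hom_algebra_def hom_assoc_def by blast+


lemmas N = tmap_contract tassoc_tensorL midswap_tensorL tensor_contract1 tensor_contract2
  contract_contract contract_tensor_simp klinear_def

lemma SDmu[simp]: "\<Delta>H (\<mu>H (tensor a b)) = contract (\<lambda>x y. contract (\<lambda>x' y'. tensor (\<mu>H (tensor x x')) (\<mu>H (tensor y y'))) (\<Delta>H b)) (\<Delta>H a)"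
  by (simp add: Dmult N)

lemma SDalpha[simp]: "\<Delta>H (\<alpha>H h) = contract (\<lambda>x y. tensor (\<alpha>H x) (\<alpha>H y)) (\<Delta>H h)"
  by (simp add: Dalpha N)

lemma SDiota[simp]: "\<Delta>H (\<iota> h) = contract (\<lambda>x y. tensor (\<iota> x) (\<iota> y)) (\<Delta>H h)"
proof -
  have "\<Delta>H h = \<Delta>H (\<alpha>H (\<iota> h))" by simp
  then have "contract (\<lambda>x y. tensor (\<iota> x) (\<iota> y)) (\<Delta>H h) = contract (\<lambda>x y. tensor (\<iota> x) (\<iota> y)) (contract (\<lambda>x y. tensor (\<alpha>H x) (\<alpha>H y)) (\<Delta>H (\<iota> h)))"
    by (simp only: SDalpha)
  also have "\<dots> = \<Delta>H (\<iota> h)" by (simp add: N contract_tensor_id)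
  finally show ?thesis by simp
qed

lemma Siotamu[simp]: "\<iota> (\<mu>H (tensor a b)) = \<mu>H (tensor (\<iota> a) (\<iota> b))"
  by (metis Hmult aH_iota iota_aH)
lemma Skappamu[simp]: "\<kappa> (\<mu>C (tensor a b)) = \<mu>C (tensor (\<kappa> a) (\<kappa> b))"
  by (metis Cmult aC_kappa kappa_aC)
lemma Skappaact[simp]: "\<kappa> (act (tensor a b)) = act (tensor (\<kappa> a) (\<iota> b))"
  by (metis Aalpha aC_kappa kappa_aC aH_iota)
lemma Sactact[simp]: "act (tensor (act (tensor c h)) k) = act (tensor (\<alpha>C c) (\<mu>H (tensor h (\<iota> k))))"
  by (metis Aact aH_iota)
lemma Sactmu[simp]: "act (tensor (\<mu>C (tensor c c')) k) = contract (\<lambda>x y. \<mu>C (tensor (act (tensor c x)) (act (tensor c' y)))) (\<Delta>H (\<iota> (\<iota> k)))"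
proof -
  have "act (tensor (\<mu>C (tensor c c')) k) = act (tensor (\<mu>C (tensor c c')) (\<alpha>H (\<alpha>H (\<iota> (\<iota> k)))))" by simp
  also have "\<dots> = \<mu>C (tmap act act (midswap (tensor (tensor c c') (\<Delta>H (\<iota> (\<iota> k))))))" by (rule Amu)
  also have "\<dots> = contract (\<lambda>x y. \<mu>C (tensor (act (tensor c x)) (act (tensor c' y)))) (\<Delta>H (\<iota> (\<iota> k)))"
    by (simp only: N L_simps) (simp add: N)
  finally show ?thesis .
qed
lemma Hrot[simp]: "\<mu>H (tensor (\<mu>H (tensor a b)) c) = \<mu>H (tensor (\<alpha>H a) (\<mu>H (tensor b (\<iota> c))))"
  by (metis Hassoc aH_iota)
lemma Crot[simp]: "\<mu>C (tensor (\<mu>C (tensor a b)) c) = \<mu>C (tensor (\<alpha>C a) (\<mu>C (tensor b (\<kappa> c))))"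
  by (metis Cassoc aC_kappa)

declare Hmult[simp] Cmult[simp] Aalpha[simp]

end



context smash begin

abbreviation "SM \<equiv> smash_mu \<mu>H \<Delta>H \<alpha>H \<mu>C \<alpha>C act"
abbreviation "SA \<equiv> smash_alpha \<alpha>H \<alpha>C"
abbreviation "CO \<equiv> smash_coaction \<Delta>H \<alpha>C"

lemma klinear_contract_param:
  assumes "\<And>b c. klinear (\<lambda>a. \<Phi> a b c)" shows "klinear (\<lambda>a. contract (\<Phi> a) t)"
  unfolding klinear_def contract_def2
  by (simp add: klinearD[OF assms] sum.distrib scal_sum mult.commute)

lemma lin_SM: "klinear SM" unfolding smash_mu_def by (rule lin_ext_linear)
lemmas SM_simps[simp] = lin_simps[OF lin_SM]

lemma SM_tensorL[simp]: "SM (tensor s t) = contract (\<lambda>h c. contract (\<lambda>h' c'. contract (\<lambda>x y. tensor (\<mu>H (tensor h (\<iota> x))) (\<mu>C (tensor (act (tensor (\<kappa> c) (\<iota> (\<iota> y)))) c'))) (\<Delta>H h')) t) s"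
proof (rule bilin_eq[where F = "\<lambda>s t. SM (tensor s t)"])
  fix p q :: "'h \<times> 'c"
  obtain a b where p: "p = (a, b)" by (cases p)
  obtain c d where q: "q = (c, d)" by (cases q)
  show "SM (tensor (basisv p) (basisv q)) = contract (\<lambda>h c. contract (\<lambda>h' c'. contract (\<lambda>x y. tensor (\<mu>H (tensor h (\<iota> x))) (\<mu>C (tensor (act (tensor (\<kappa> c) (\<iota> (\<iota> y)))) c'))) (\<Delta>H h')) (basisv q)) (basisv p)"
    unfolding p q tensor_basisv[symmetric] contract_basis
    by (simp add: tensor_basisv smash_mu_def smash_mu_elem_def tmap_contract)
qed (auto simp: klinear_def)

lemma SA_def2[simp]: "SA t = contract (\<lambda>x y. tensor (\<alpha>H x) (\<alpha>C y)) t"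
  unfolding smash_alpha_def tmap_contract ..
lemma CO_def2[simp]: "CO t = contract (\<lambda>x y. tassoc (tensor (\<Delta>H x) (\<alpha>C y))) t"
  unfolding smash_coaction_def tmap_contract by simp

lemma B2: "tmap \<alpha>H SA (CO m) = CO (SA m)"
  apply (subst (1 2) contract_tensor_id[symmetric])
  apply (simp add: N)
  done


lemma coassoc_sw:
  assumes A1: "\<And>b c. klinear (\<lambda>a. \<Phi> a b c)" and A2: "\<And>a c. klinear (\<lambda>b. \<Phi> a b c)"
    and A3: "\<And>a b. klinear (\<lambda>c. \<Phi> a b c)"
  shows "contract (\<lambda>x y. contract (\<lambda>a b. \<Phi> a b (\<alpha>H y)) (\<Delta>H x)) (\<Delta>H h) = contract (\<lambda>x y. contract (\<lambda>b c. \<Phi> (\<alpha>H x) b c) (\<Delta>H y)) (\<Delta>H h)"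
proof -
  let ?K = "contract (\<lambda>a bc. contract (\<lambda>b c. \<Phi> a b c) bc)"
  have e1: "tassoc (tmap \<Delta>H \<alpha>H s) = contract (\<lambda>x y. contract (\<lambda>a b. tensor a (tensor b (\<alpha>H y))) (\<Delta>H x)) s" for s
    by (simp add: N)
  have e2: "tmap \<alpha>H \<Delta>H s = contract (\<lambda>x y. tensor (\<alpha>H x) (\<Delta>H y)) s" for s
    by (simp add: tmap_contract)
  have e4: "contract (\<lambda>b c. \<Phi> a b c) (tensor b c) = \<Phi> a b c" for a b c
    by (rule contract_tensor) (auto intro: A2 A3)
  have e3: "?K (tensor a bc) = contract (\<lambda>b c. \<Phi> a b c) bc" for a bc
    by (rule contract_tensor) (auto intro: klinear_contract_param A1 contract_linear)
  have "?K (tassoc (tmap \<Delta>H \<alpha>H (\<Delta>H h))) = ?K (tmap \<alpha>H \<Delta>H (\<Delta>H h))" by (simp only: coassoc)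
  then show ?thesis by (simp only: e1 e2 contract_contract e3 e4)
qed

lemma B3: "tassoc (tmap \<Delta>H SA (CO m)) = tmap \<alpha>H CO (CO m)"
  apply (subst (1 2) contract_tensor_id[symmetric])
  apply (simp add: N)
  apply (rule contract_cong)
  subgoal for x y
    using coassoc_sw[of "\<lambda>a b c. tensor a (tensor b (tensor c (\<alpha>C (\<alpha>C y))))" x] by (simp add: N)
  done

lemma A3: "SA (SM (tensor a b)) = SM (tensor (SA a) (SA b))"
  apply (subst (1 2) contract_tensor_id[symmetric, of a])
  apply (subst (1 2) contract_tensor_id[symmetric, of b])
  apply (simp add: N)
  done

lemma C3e: "CO (SM (tensor (tensor h c) (tensor h' c'))) = tensor_mu \<mu>H SM (tensor (CO (tensor h c)) (CO (tensor h' c')))"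
proof -
  define \<Phi> where "\<Phi> = (\<lambda>a b z. contract (\<lambda>h1 h2. tensor (\<mu>H (tensor h1 (\<iota> a))) (tensor (\<mu>H (tensor h2 (\<iota> b))) (\<mu>C (tensor (act (tensor c (\<iota> (\<iota> z)))) (\<alpha>C c'))))) (\<Delta>H h))"
  have L: "CO (SM (tensor (tensor h c) (tensor h' c'))) = contract (\<lambda>x y. contract (\<lambda>a b. \<Phi> a b (\<alpha>H y)) (\<Delta>H x)) (\<Delta>H h')"
    unfolding \<Phi>_def
    apply (simp add: N)
    apply (rule contract_cong)
    apply (rule contract_swap)
    done
  have R: "tensor_mu \<mu>H SM (tensor (CO (tensor h c)) (CO (tensor h' c'))) = contract (\<lambda>x y. contract (\<lambda>b z. \<Phi> (\<alpha>H x) b z) (\<Delta>H y)) (\<Delta>H h')"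
    unfolding \<Phi>_def
    apply (simp add: N tensor_mu_def)
    apply (rule contract_cong)
    apply (rule contract_swap)
    done
  show ?thesis unfolding L R
    by (rule coassoc_sw) (simp_all add: \<Phi>_def N)
qed

lemma A4e: "SM (tensor (SA (tensor h c)) (SM (tensor (tensor h' c') (tensor h'' c'')))) = SM (tensor (SM (tensor (tensor h c) (tensor h' c'))) (SA (tensor h'' c'')))"
proof -
  define \<Phi> where "\<Phi> = (\<lambda>a b z. contract (\<lambda>u v. tensor (\<mu>H (tensor (\<alpha>H h) (\<mu>H (tensor (\<iota> u) (\<iota> (\<iota> a))))))
     (\<mu>C (tensor (act (tensor c (\<mu>H (tensor (\<iota> (\<iota> v)) (\<iota> (\<iota> (\<iota> b)))))))
                 (\<mu>C (tensor (act (tensor (\<kappa> c') (\<iota> (\<iota> (\<iota> z))))) c''))))) (\<Delta>H h'))"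
  have L: "SM (tensor (SA (tensor h c)) (SM (tensor (tensor h' c') (tensor h'' c'')))) = contract (\<lambda>x y. contract (\<lambda>a b. \<Phi> a b (\<alpha>H y)) (\<Delta>H x)) (\<Delta>H h'')"
    unfolding \<Phi>_def
    apply (simp add: N)
    apply (rule contract_cong)
    apply (rule contract_swap)
    done
  have R: "SM (tensor (SM (tensor (tensor h c) (tensor h' c'))) (SA (tensor h'' c''))) = contract (\<lambda>x y. contract (\<lambda>b z. \<Phi> (\<alpha>H x) b z) (\<Delta>H y)) (\<Delta>H h'')"
    unfolding \<Phi>_def
    apply (simp add: N)
    apply (rule trans[OF contract_swap])
    apply (rule contract_cong)
    apply (rule contract_swap)
    done
  show ?thesis unfolding L R
    by (rule coassoc_sw) (simp_all add: \<Phi>_def N)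
qed

lemma lift_tensor:
  fixes F G :: "('x \<times> 'y, 'kk::field) vec \<Rightarrow> ('z, 'kk) vec"
  assumes "klinear F" "klinear G" "\<And>x y. F (tensor x y) = G (tensor x y)"
  shows "F m = G m"
  by (rule lin_eq_tensor[OF assms(1,2)]) (rule assms(3))

lemma C3full: "CO (SM (tensor a b)) = tensor_mu \<mu>H SM (tensor (CO a) (CO b))"
proof (rule lift_tensor[where F = "\<lambda>a. CO (SM (tensor a b))" and G = "\<lambda>a. tensor_mu \<mu>H SM (tensor (CO a) (CO b))"])
  fix h c
  show "CO (SM (tensor (tensor h c) b)) = tensor_mu \<mu>H SM (tensor (CO (tensor h c)) (CO b))"
  proof (rule lift_tensor[where F = "\<lambda>b. CO (SM (tensor (tensor h c) b))" and G = "\<lambda>b. tensor_mu \<mu>H SM (tensor (CO (tensor h c)) (CO b))"])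
    fix h' c'
    show "CO (SM (tensor (tensor h c) (tensor h' c'))) = tensor_mu \<mu>H SM (tensor (CO (tensor h c)) (CO (tensor h' c')))"
      by (rule C3e)
  qed (simp_all add: klinear_def N tensor_mu_def)
qed (simp_all add: klinear_def N tensor_mu_def)

lemma A4full: "SM (tensor (SA a) (SM (tensor b d))) = SM (tensor (SM (tensor a b)) (SA d))"
proof (rule lift_tensor[where F = "\<lambda>a. SM (tensor (SA a) (SM (tensor b d)))" and G = "\<lambda>a. SM (tensor (SM (tensor a b)) (SA d))"])
  fix h c
  show "SM (tensor (SA (tensor h c)) (SM (tensor b d))) = SM (tensor (SM (tensor (tensor h c) b)) (SA d))"
  proof (rule lift_tensor[where F = "\<lambda>b. SM (tensor (SA (tensor h c)) (SM (tensor b d)))" and G = "\<lambda>b. SM (tensor (SM (tensor (tensor h c) b)) (SA d))"])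
    fix h' c'
    show "SM (tensor (SA (tensor h c)) (SM (tensor (tensor h' c') d))) = SM (tensor (SM (tensor (tensor h c) (tensor h' c'))) (SA d))"
    proof (rule lift_tensor[where F = "\<lambda>d. SM (tensor (SA (tensor h c)) (SM (tensor (tensor h' c') d)))" and G = "\<lambda>d. SM (tensor (SM (tensor (tensor h c) (tensor h' c'))) (SA d))"])
      fix h'' c''
      show "SM (tensor (SA (tensor h c)) (SM (tensor (tensor h' c') (tensor h'' c'')))) = SM (tensor (SM (tensor (tensor h c) (tensor h' c'))) (SA (tensor h'' c'')))"
        by (rule A4e)
    qed (simp_all add: klinear_def N)
  qed (simp_all add: klinear_def N)
qed (simp_all add: klinear_def N)

lemma lin_SA: "klinear SA" unfolding smash_alpha_def tmap_def by (rule lin_ext_linear)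
lemma lin_CO: "klinear CO" unfolding smash_coaction_def tmap_def
  by (rule klinear_comp[OF tassoc_linear lin_ext_linear])

lemma main: "left_comodule_hom_algebra \<mu>H \<Delta>H \<alpha>H SM SA CO"
  unfolding left_comodule_hom_algebra_def hom_assoc_def left_comodule_def hom_assoc_morphism_def
  using lin_SM lin_SA lin_CO A3 A4full B2 B3 C3full by metis

end



theorem proposition3p15:
  fixes \<mu>H :: "('h \<times> 'h, 'k::field) vec \<Rightarrow> ('h, 'k) vec"
    and \<Delta>H :: "('h, 'k) vec \<Rightarrow> ('h \<times> 'h, 'k) vec"
    and \<alpha>H :: "('h, 'k) vec \<Rightarrow> ('h, 'k) vec"
    and \<mu>C :: "('c \<times> 'c, 'k) vec \<Rightarrow> ('c, 'k) vec"
    and \<alpha>C :: "('c, 'k) vec \<Rightarrow> ('c, 'k) vec"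
    and act :: "('c \<times> 'h, 'k) vec \<Rightarrow> ('c, 'k) vec"
  assumes "hom_bialgebra \<mu>H \<Delta>H \<alpha>H"
    and "right_module_hom_algebra \<mu>H \<Delta>H \<alpha>H \<mu>C \<alpha>C act"
    and "bij \<alpha>H" and "bij \<alpha>C"
  shows "left_comodule_hom_algebra \<mu>H \<Delta>H \<alpha>H
           (smash_mu \<mu>H \<Delta>H \<alpha>H \<mu>C \<alpha>C act) (smash_alpha \<alpha>H \<alpha>C)
           (smash_coaction \<Delta>H \<alpha>C)"
  proof -
  interpret smash \<mu>H \<Delta>H \<alpha>H \<mu>C \<alpha>C act
    by unfold_locales (rule assms)+
  show ?thesis by (rule main)
qed

end
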